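(* Let $(E,\rho)$ be a complete partial $b_v(s)$ metric space and let $S:E\to E$ satisfy $\rho(Su,Sw)\le\lambda\max\{\rho(u,w),\rho(u,Su),\rho(w,Sw)\}$ for all $u,w\in E$, where $\lambda\in[0,\tfrac1s)$. Then $S$ has a unique fixed point $b\in E$, and $\rho(b,b)=0$.
   Context: Let $E$ be a nonempty set and $v\in\mathbb{N}$. $(E,\rho)$, with $\rho:E\times E\to[0,\infty)$, is a partial $b_v(s)$ metric space if there is a real $s\ge1$ such that for all $u,w,z_1,\dots,z_v\in E$: (1) $u=w$ iff $\rho(u,u)=\rho(u,w)=\rho(w,w)$; (2) $\rho(u,u)\le\rho(u,w)$; (3) $\rho(u,w)=\rho(w,u)$; (4) $\rho(u,w)\le s[\rho(u,z_1)+\rho(z_1,z_2)+\dots+\rho(z_{v-1},z_v)+\rho(z_v,w)]-\sum_{i=1}^v\rho(z_i,z_i)$. A sequence $\{u_n\}$ in $E$ converges to $u\in E$ if $\lim_{n\to\infty}\rho(u_n,u)=\rho(u,u)$; it is Cauchy if $\lim_{n,m\to\infty}\rho(u_n,u_m)$ exists and is finite. $(E,\rho)$ is complete if for every Cauchy sequence $\{u_n\}$ there is $u\in E$ with $\lim_{n,m\to\infty}\rho(u_n,u_m)=\lim_{n\to\infty}\rho(u_n,u)=\rho(u,u)$. *)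

theory Defs
  imports "HOL-Analysis.Analysis"
begin

definition partial_bv_metric :: "'a set \<Rightarrow> ('a \<Rightarrow> 'a \<Rightarrow> real) \<Rightarrow> nat \<Rightarrow> real \<Rightarrow> bool" where
  "partial_bv_metric E rho v s \<longleftrightarrow>
     E \<noteq> {} \<and> v \<ge> 1 \<and> s \<ge> 1 \<and>
     (\<forall>u\<in>E. \<forall>w\<in>E. rho u w \<ge> 0) \<and>
     (\<forall>u\<in>E. \<forall>w\<in>E. (u = w \<longleftrightarrow> rho u u = rho u w \<and> rho u w = rho w w)) \<and>
     (\<forall>u\<in>E. \<forall>w\<in>E. rho u u \<le> rho u w) \<and>
     (\<forall>u\<in>E. \<forall>w\<in>E. rho u w = rho w u) \<and>
     (\<forall>u\<in>E. \<forall>w\<in>E. \<forall>z::nat \<Rightarrow> 'a. (\<forall>i\<in>{1..v}. z i \<in> E) \<longrightarrow>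
        rho u w \<le> s * (rho u (z 1) + (\<Sum>i\<in>{1..<v}. rho (z i) (z (Suc i))) + rho (z v) w)
                   - (\<Sum>i\<in>{1..v}. rho (z i) (z i)))"

definition pbv_converges :: "('a \<Rightarrow> 'a \<Rightarrow> real) \<Rightarrow> (nat \<Rightarrow> 'a) \<Rightarrow> 'a \<Rightarrow> bool" where
  "pbv_converges rho x u \<longleftrightarrow> (\<lambda>n. rho (x n) u) \<longlonglongrightarrow> rho u u"

definition pbv_double_lim :: "('a \<Rightarrow> 'a \<Rightarrow> real) \<Rightarrow> (nat \<Rightarrow> 'a) \<Rightarrow> real \<Rightarrow> bool" where
  "pbv_double_lim rho x L \<longleftrightarrow>
     (\<forall>e>0. \<exists>N. \<forall>n\<ge>N. \<forall>m\<ge>N. \<bar>rho (x n) (x m) - L\<bar> < e)"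

definition pbv_cauchy :: "('a \<Rightarrow> 'a \<Rightarrow> real) \<Rightarrow> (nat \<Rightarrow> 'a) \<Rightarrow> bool" where
  "pbv_cauchy rho x \<longleftrightarrow> (\<exists>L. pbv_double_lim rho x L)"

definition pbv_complete :: "'a set \<Rightarrow> ('a \<Rightarrow> 'a \<Rightarrow> real) \<Rightarrow> bool" where
  "pbv_complete E rho \<longleftrightarrow>
     (\<forall>x. (\<forall>n. x n \<in> E) \<longrightarrow> pbv_cauchy rho x \<longrightarrow>
        (\<exists>u\<in>E. pbv_double_lim rho x (rho u u) \<and> pbv_converges rho x u))"

end

theory Submission
  imports Defs
begin

lemma tri3:
  assumes "partial_bv_metric E rho v s" "u \<in> E" "w \<in> E" "y \<in> E"
  shows "rho u w \<le> s * rho u y + s * rho y w + s * (real v - 1) * rho y y"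
proof -
  have v1: "v \<ge> 1" and s1: "s \<ge> 1" and nn: "rho y y \<ge> 0" using assms unfolding partial_bv_metric_def by auto
  have "rho u w \<le> s * (rho u ((\<lambda>_. y) 1) + (\<Sum>i\<in>{1..<v}. rho ((\<lambda>_. y) i) ((\<lambda>_. y) (Suc i))) + rho ((\<lambda>_. y) v) w)
                   - (\<Sum>i\<in>{1..v}. rho ((\<lambda>_. y) i) ((\<lambda>_. y) i))"
  proof -
    have H: "\<forall>u\<in>E. \<forall>w\<in>E. \<forall>z::nat \<Rightarrow> 'a. (\<forall>i\<in>{1..v}. z i \<in> E) \<longrightarrow>
        rho u w \<le> s * (rho u (z 1) + (\<Sum>i\<in>{1..<v}. rho (z i) (z (Suc i))) + rho (z v) w)
                   - (\<Sum>i\<in>{1..v}. rho (z i) (z i))"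
      using assms(1) unfolding partial_bv_metric_def by blast
    show ?thesis using H[rule_format, OF assms(2) assms(3), of "\<lambda>_. y"] assms(4) by simp
  qed
  also have "\<dots> = s * (rho u y + real (v - 1) * rho y y + rho y w) - real v * rho y y" by simp
  also have "real (v - 1) = real v - 1" using v1 by simp
  finally have "rho u w \<le> s * (rho u y + (real v - 1) * rho y y + rho y w) - real v * rho y y" .
  moreover have "real v * rho y y \<ge> 0" using nn by simp
  ultimately show ?thesis by (simp add: algebra_simps)
qed

lemma h1: fixes r l :: real shows "r \<le> l * r \<Longrightarrow> l < 1 \<Longrightarrow> r \<ge> 0 \<Longrightarrow> r = 0"
  by (metis mult_le_cancel_right1 not_le order.antisym)
lemma h2: fixes a k :: real shows "k * a \<le> 0 \<Longrightarrow> k > 0 \<Longrightarrow> a \<ge> 0 \<Longrightarrow> a = 0"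
  by (simp add: mult_le_0_iff)
lemma h3: fixes l s :: real shows "l * s < 1 \<Longrightarrow> s \<ge> 1 \<Longrightarrow> l \<ge> 0 \<Longrightarrow> l < 1"
  by (metis dual_order.strict_trans1 mult_le_cancel_left1 not_le)

theorem mainTheorem4:
  fixes E :: "'a set" and rho :: "'a \<Rightarrow> 'a \<Rightarrow> real" and v :: nat and s lambda :: real
    and S :: "'a \<Rightarrow> 'a"
  assumes "partial_bv_metric E rho v s"
    and "pbv_complete E rho"
    and "\<forall>u\<in>E. S u \<in> E"
    and "\<forall>u\<in>E. \<forall>w\<in>E. rho (S u) (S w) \<le> lambda * max (rho u w) (max (rho u (S u)) (rho w (S w)))"
    and "0 \<le> lambda" and "lambda < 1 / s"
  shows "\<exists>b\<in>E. S b = b \<and> rho b b = 0 \<and> (\<forall>c\<in>E. S c = c \<longrightarrow> c = b)"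
proof -
  note M = assms(1)[unfolded partial_bv_metric_def]
  have s1: "s \<ge> 1" and v1: "v \<ge> 1" using M by auto
  have nn: "\<And>u w. u \<in> E \<Longrightarrow> w \<in> E \<Longrightarrow> rho u w \<ge> 0" using M by auto
  have refl: "\<And>u w. u \<in> E \<Longrightarrow> w \<in> E \<Longrightarrow> rho u u \<le> rho u w" using M by auto
  have sym: "\<And>u w. u \<in> E \<Longrightarrow> w \<in> E \<Longrightarrow> rho u w = rho w u" using M by auto
  have eqI: "\<And>u w. u \<in> E \<Longrightarrow> w \<in> E \<Longrightarrow> rho u u = rho u w \<Longrightarrow> rho u w = rho w w \<Longrightarrow> u = w"
    using M by blast
  have SE: "\<And>u. u \<in> E \<Longrightarrow> S u \<in> E" using assms(3) by auto
  have contr: "\<And>u w. u \<in> E \<Longrightarrow> w \<in> E \<Longrightarrow> rho (S u) (S w) \<le> lambda * max (rho u w) (max (rho u (S u)) (rho w (S w)))"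
    using assms(4) by auto
  have ls: "lambda * s < 1" using assms(6) s1 by (simp add: field_simps)
  have l1: "lambda < 1" using h3[OF ls s1 assms(5)] .
  obtain x0 where x0: "x0 \<in> E" using M by auto
  define x where "x n = (S ^^ n) x0" for n
  have xE: "x n \<in> E" for n by (induction n) (auto simp: x_def x0 SE)
  have xS: "x (Suc n) = S (x n)" for n by (simp add: x_def)
  define c where "c = rho (x 0) (x 1)"
  have c0: "c \<ge> 0" unfolding c_def using nn xE by auto
  have step: "rho (x (Suc n)) (x (Suc (Suc n))) \<le> lambda * rho (x n) (x (Suc n))" for n
  proof -
    have h: "rho (x (Suc n)) (x (Suc (Suc n))) \<le> lambda * max (rho (x n) (x (Suc n))) (max (rho (x n) (x (Suc n))) (rho (x (Suc n)) (x (Suc (Suc n)))))"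
      using contr[OF xE xE, of n "Suc n"] by (simp add: xS)
    show ?thesis
    proof (cases "rho (x (Suc n)) (x (Suc (Suc n))) \<le> rho (x n) (x (Suc n))")
      case True then show ?thesis using h by (simp add: max_def)
    next
      case False
      then have "rho (x (Suc n)) (x (Suc (Suc n))) \<le> lambda * rho (x (Suc n)) (x (Suc (Suc n)))"
        using h by (simp add: max_def)
      then have "rho (x (Suc n)) (x (Suc (Suc n))) \<le> 0" using h1 l1 nn[OF xE xE] by fastforce
      moreover have "lambda * rho (x n) (x (Suc n)) \<ge> 0" using assms(5) nn[OF xE xE] by simp
      ultimately show ?thesis by linarith
    qed
  qed
  have geo: "rho (x n) (x (Suc n)) \<le> lambda ^ n * c" for n
  proof (induction n)
    case 0 then show ?case by (simp add: c_def)
  next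
    case (Suc n)
    have "rho (x (Suc n)) (x (Suc (Suc n))) \<le> lambda * rho (x n) (x (Suc n))" by (rule step)
    also have "\<dots> \<le> lambda * (lambda ^ n * c)" using Suc assms(5) by (simp add: mult_left_mono)
    finally show ?case by simp
  qed
  have diag: "rho (x n) (x n) \<le> lambda ^ n * c" for n
    using refl[OF xE xE, of n "Suc n"] geo[of n] by simp
  define C where "C = s * (real v - 1)"
  have C0: "C \<ge> 0" unfolding C_def using s1 v1 by simp
  define D where "D = (s + C) * c / (1 - s * lambda)"
  have Deq: "D * (1 - s * lambda) = (s + C) * c" unfolding D_def using ls by (simp add: mult.commute)
  have D0: "D \<ge> 0" unfolding D_def using ls C0 c0 s1 by (intro divide_nonneg_pos) (auto simp: mult.commute)
  have Dc: "c \<le> D"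
  proof -
    have p: "1 - s * lambda > 0" using ls by (simp add: mult.commute)
    have "c * (1 - s * lambda) \<le> c * (s + C)"
    proof (rule mult_left_mono[OF _ c0])
      have "0 \<le> s * lambda" using s1 assms(5) by simp
      then show "1 - s * lambda \<le> s + C" using s1 C0 by linarith
    qed
    then have "c * (1 - s * lambda) \<le> (s + C) * c" by (simp add: mult.commute)
    then show ?thesis unfolding D_def using p by (simp add: le_divide_eq)
  qed
  have bnd: "rho (x n) (x (n + p)) \<le> D * lambda ^ n" for p n
  proof (induction p arbitrary: n)
    case 0
    have "rho (x n) (x n) \<le> lambda ^ n * c" by (rule diag)
    also have "\<dots> \<le> lambda ^ n * D" using Dc assms(5) by (simp add: mult_left_mono)
    finally show ?case by (simp add: mult.commute)
  next
    case (Suc p)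
    have "rho (x n) (x (n + Suc p)) \<le> s * rho (x n) (x (Suc n)) + s * rho (x (Suc n)) (x (n + Suc p))
        + C * rho (x (Suc n)) (x (Suc n))"
      using tri3[OF assms(1) xE xE xE] unfolding C_def by simp
    also have "\<dots> \<le> s * (lambda ^ n * c) + s * (D * lambda ^ Suc n) + C * (lambda ^ n * c)"
    proof -
      have a: "s * rho (x n) (x (Suc n)) \<le> s * (lambda ^ n * c)" using geo s1 by simp
      have b: "s * rho (x (Suc n)) (x (n + Suc p)) \<le> s * (D * lambda ^ Suc n)"
        using Suc.IH[of "Suc n"] s1 by simp
      have "rho (x (Suc n)) (x (Suc n)) \<le> lambda ^ n * c"
      proof -
        have "lambda ^ Suc n \<le> lambda ^ n" using assms(5) l1 by (intro power_decreasing) auto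
        then have "lambda ^ Suc n * c \<le> lambda ^ n * c" using c0 by (rule mult_right_mono)
        then show ?thesis using diag[of "Suc n"] by linarith
      qed
      then have d: "C * rho (x (Suc n)) (x (Suc n)) \<le> C * (lambda ^ n * c)" using C0 by (simp add: mult_left_mono)
      show ?thesis using a b d by linarith
    qed
    also have "\<dots> = lambda ^ n * ((s + C) * c + s * lambda * D)" by (simp add: algebra_simps)
    also have "(s + C) * c + s * lambda * D = D" using Deq by (simp add: algebra_simps)
    finally show ?case by (simp add: mult.commute)
  qed
  have lim0: "(\<lambda>n. D * lambda ^ n) \<longlonglongrightarrow> 0"
    using LIMSEQ_power_zero[of lambda] assms(5) l1 tendsto_mult_right_zero by auto
  have bnd2: "\<bar>rho (x n) (x m)\<bar> \<le> D * lambda ^ min n m" for n m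
  proof (cases "n \<le> m")
    case True
    then obtain p where "m = n + p" using le_Suc_ex by blast
    then show ?thesis using bnd[of n p] nn[OF xE xE, of n m] True by simp
  next
    case False
    then obtain p where "n = m + p" by (metis le_Suc_ex nat_le_linear)
    then show ?thesis using bnd[of m p] nn[OF xE xE, of n m] sym[OF xE xE, of n m] False by simp
  qed
  have dl0: "pbv_double_lim rho x 0"
    unfolding pbv_double_lim_def
  proof (intro allI impI)
    fix e :: real assume e: "e > 0"
    from lim0 e obtain N where N: "\<And>n. n \<ge> N \<Longrightarrow> \<bar>D * lambda ^ n\<bar> < e"
      unfolding LIMSEQ_def dist_real_def by fastforce
    show "\<exists>N. \<forall>n\<ge>N. \<forall>m\<ge>N. \<bar>rho (x n) (x m) - 0\<bar> < e"
    proof (intro exI allI impI)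
      fix n m assume "n \<ge> N" "m \<ge> N"
      then have "min n m \<ge> N" by simp
      then show "\<bar>rho (x n) (x m) - 0\<bar> < e" using N[of "min n m"] bnd2[of n m] by simp
    qed
  qed
  then obtain u where uE: "u \<in> E" and dlu: "pbv_double_lim rho x (rho u u)" and cu: "pbv_converges rho x u"
    using assms(2) xE unfolding pbv_complete_def pbv_cauchy_def by blast
  have uu: "rho u u = 0"
  proof (rule ccontr)
    assume ne: "rho u u \<noteq> 0"
    define e where "e = \<bar>rho u u\<bar> / 2"
    have e: "e > 0" using ne e_def by simp
    obtain N1 where N1: "\<forall>n\<ge>N1. \<forall>m\<ge>N1. \<bar>rho (x n) (x m) - rho u u\<bar> < e" using dlu e unfolding pbv_double_lim_def by blast
    obtain N2 where N2: "\<forall>n\<ge>N2. \<forall>m\<ge>N2. \<bar>rho (x n) (x m) - 0\<bar> < e" using dl0 e unfolding pbv_double_lim_def by blast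
    have "\<bar>rho (x (N1+N2)) (x (N1+N2)) - rho u u\<bar> < e" using N1 by simp
    moreover have "\<bar>rho (x (N1+N2)) (x (N1+N2)) - 0\<bar> < e" using N2 by simp
    ultimately show False unfolding e_def by linarith
  qed
  have xu: "(\<lambda>n. rho (x n) u) \<longlonglongrightarrow> 0" using cu uu unfolding pbv_converges_def by simp
  define a where "a = rho u (S u)"
  have a0: "a \<ge> 0" unfolding a_def using nn uE SE by auto
  define t where "t n = s * rho (x (Suc n)) u + s * lambda * (rho (x n) u + lambda ^ n * c) + C * (lambda ^ Suc n * c)" for n
  have tlim: "t \<longlonglongrightarrow> 0"
  proof -
    have g: "(\<lambda>n. lambda ^ n) \<longlonglongrightarrow> 0" using LIMSEQ_power_zero[of lambda] assms(5) l1 by auto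
    have x1: "(\<lambda>n. rho (x (Suc n)) u) \<longlonglongrightarrow> 0" using xu by (rule LIMSEQ_Suc)
    have g1: "(\<lambda>n. lambda ^ Suc n) \<longlonglongrightarrow> 0" using g by (rule LIMSEQ_Suc)
    have "(\<lambda>n. s * rho (x (Suc n)) u + s * lambda * (rho (x n) u + lambda ^ n * c) + C * (lambda ^ Suc n * c)) \<longlonglongrightarrow>
       s * 0 + s * lambda * (0 + 0 * c) + C * (0 * c)"
      by (intro tendsto_intros x1 xu g g1)
    then show ?thesis unfolding t_def by simp
  qed
  have tb: "(1 - s * lambda) * a \<le> t n" for n
  proof -
    have hh1: "rho u (S u) \<le> s * rho u (x (Suc n)) + s * rho (x (Suc n)) (S u) + C * rho (x (Suc n)) (x (Suc n))"
      using tri3[OF assms(1) uE SE[OF uE] xE] unfolding C_def by simp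
    have hh2: "rho u (x (Suc n)) = rho (x (Suc n)) u" using sym uE xE by auto
    have hh3: "rho (x (Suc n)) (S u) \<le> lambda * (rho (x n) u + lambda ^ n * c + a)"
    proof -
      have "rho (x (Suc n)) (S u) \<le> lambda * max (rho (x n) u) (max (rho (x n) (x (Suc n))) a)"
        using contr[OF xE uE, of n] by (simp add: xS a_def)
      also have "\<dots> \<le> lambda * (rho (x n) u + lambda ^ n * c + a)"
      proof (rule mult_left_mono[OF _ assms(5)])
        have "rho (x n) u \<ge> 0" "rho (x n) (x (Suc n)) \<ge> 0" using nn xE uE by auto
        moreover have "lambda ^ n * c \<ge> 0" using assms(5) c0 by simp
        ultimately show "max (rho (x n) u) (max (rho (x n) (x (Suc n))) a) \<le> rho (x n) u + lambda ^ n * c + a"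
          using geo[of n] a0 by linarith
      qed
      finally show ?thesis .
    qed
    have hh4: "C * rho (x (Suc n)) (x (Suc n)) \<le> C * (lambda ^ Suc n * c)"
      using diag[of "Suc n"] C0 by (simp add: mult_left_mono)
    have "a \<le> s * rho (x (Suc n)) u + s * (lambda * (rho (x n) u + lambda ^ n * c + a)) + C * (lambda ^ Suc n * c)"
    proof -
      have "s * rho (x (Suc n)) (S u) \<le> s * (lambda * (rho (x n) u + lambda ^ n * c + a))"
        using hh3 s1 by (intro mult_left_mono) auto
      then show ?thesis unfolding a_def using hh1[unfolded hh2] hh4 by linarith
    qed
    then show ?thesis unfolding t_def by (simp add: algebra_simps)
  qed
  have "(1 - s * lambda) * a \<le> 0"
    using tlim tb by (intro LIMSEQ_le_const[OF tlim]) auto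
  then have aa: "a = 0" using a0 ls h2[of "1 - s * lambda" a] by (simp add: mult.commute)
  have SuSu: "rho (S u) (S u) = 0"
    using refl[OF SE[OF uE] uE] sym[OF uE SE[OF uE]] nn[OF SE[OF uE] SE[OF uE]] aa a_def by simp
  have fixu: "S u = u"
    using eqI[OF uE SE[OF uE]] uu aa SuSu a_def by simp
  have uniq: "c' = u" if cE: "c' \<in> E" and fc: "S c' = c'" for c'
  proof -
    have "rho c' c' \<le> lambda * rho c' c'" using contr[OF cE cE] fc by simp
    then have cc: "rho c' c' = 0" using nn[OF cE cE] l1 h1 by blast
    have "rho u c' \<le> lambda * max (rho u c') (max (rho u u) (rho c' c'))"
      using contr[OF uE cE] fc fixu by simp
    then have "rho u c' \<le> lambda * rho u c'" using uu cc nn[OF uE cE] by (simp add: max_def)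
    then have uc: "rho u c' = 0" using nn[OF uE cE] l1 h1 by blast
    show ?thesis using eqI[OF uE cE] uu cc uc by simp
  qed
  show ?thesis using uE fixu uu uniq by blast
qed

end
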